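(* Let $\mathcal{A}_1,\dots,\mathcal{A}_N$ be finite nonempty strategy sets, $\mathcal{A}=\prod_q\mathcal{A}_q$, fix a player $p$ and $\mathcal{A}_{-p}=\prod_{q\ne p}\mathcal{A}_q$. Consider the linear maps on payoffs $G\in\mathbb{R}^{\mathcal{A}}$: $T^{\mathrm{WSCE}}_p:\mathbb{R}^{\mathcal{A}}\to\mathbb{R}^{\mathcal{A}_p\times\mathcal{A}_p\times\mathcal{A}_{-p}}$, $(T^{\mathrm{WSCE}}_pG)(a'_p,a''_p,a_{-p})=G(a'_p,a_{-p})-G(a''_p,a_{-p})$; $T^{\mathrm{CE}}_p:\mathbb{R}^{\mathcal{A}}\to\mathbb{R}^{\mathcal{A}_p\times\mathcal{A}_p\times\mathcal{A}}$, $(T^{\mathrm{CE}}_pG)(a'_p,a''_p,a)=G(a'_p,a_{-p})-G(a''_p,a_{-p})$ if $a_p=a''_p$ and $0$ otherwise; $T^{\mathrm{CCE}}_p:\mathbb{R}^{\mathcal{A}}\to\mathbb{R}^{\mathcal{A}_p\times\mathcal{A}}$, $(T^{\mathrm{CCE}}_pG)(a'_p,a)=G(a'_p,a_{-p})-G(a)$. Then each of $T^{\mathrm{WSCE}}_p$, $T^{\mathrm{CE}}_p$ and $T^{\mathrm{CCE}}_p$ has rank $|\mathcal{A}|-|\mathcal{A}_{-p}|$.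
   Context: Joint strategies are written $a=(a_p,a_{-p})$ with $a_p\in\mathcal{A}_p$ and $a_{-p}\in\mathcal{A}_{-p}$. *)

theory Defs
  imports "HOL-Analysis.Analysis" "HOL-Library.Function_Algebras"
begin

text \<open>Players are 0,...,N-1; A q is the strategy set of player q.
Joint strategies are extensional functions in PiE {..<N} A.\<close>

definition joint :: "nat \<Rightarrow> (nat \<Rightarrow> 'a set) \<Rightarrow> (nat \<Rightarrow> 'a) set" where
  "joint N A = PiE {..<N} A"

definition opp :: "nat \<Rightarrow> (nat \<Rightarrow> 'a set) \<Rightarrow> nat \<Rightarrow> (nat \<Rightarrow> 'a) set" where
  "opp N A p = PiE ({..<N} - {p}) A"

definition payoffs :: "nat \<Rightarrow> (nat \<Rightarrow> 'a set) \<Rightarrow> ((nat \<Rightarrow> 'a) \<Rightarrow> real) set" where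
  "payoffs N A = {G. \<forall>a. a \<notin> joint N A \<longrightarrow> G a = 0}"

definition fscale :: "real \<Rightarrow> ('b \<Rightarrow> real) \<Rightarrow> ('b \<Rightarrow> real)" where
  "fscale c f = (\<lambda>x. c * f x)"

definition fdim :: "('b \<Rightarrow> real) set \<Rightarrow> nat" where
  "fdim S = vector_space.dim fscale S"

definition rank_on :: "((nat \<Rightarrow> 'a) \<Rightarrow> real) set \<Rightarrow> (((nat \<Rightarrow> 'a) \<Rightarrow> real) \<Rightarrow> ('b \<Rightarrow> real)) \<Rightarrow> nat" where
  "rank_on V T = fdim (T ` V)"

text \<open>Codomain entries outside the index set are set to 0 (codomain = R^index set).\<close>
definition T_WSCE :: "nat \<Rightarrow> (nat \<Rightarrow> 'a set) \<Rightarrow> nat \<Rightarrow> ((nat \<Rightarrow> 'a) \<Rightarrow> real)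
    \<Rightarrow> ('a \<times> 'a \<times> (nat \<Rightarrow> 'a)) \<Rightarrow> real" where
  "T_WSCE N A p G = (\<lambda>(a1, a2, b).
     if a1 \<in> A p \<and> a2 \<in> A p \<and> b \<in> opp N A p
     then G (b(p := a1)) - G (b(p := a2)) else 0)"

definition T_CE :: "nat \<Rightarrow> (nat \<Rightarrow> 'a set) \<Rightarrow> nat \<Rightarrow> ((nat \<Rightarrow> 'a) \<Rightarrow> real)
    \<Rightarrow> ('a \<times> 'a \<times> (nat \<Rightarrow> 'a)) \<Rightarrow> real" where
  "T_CE N A p G = (\<lambda>(a1, a2, a).
     if a1 \<in> A p \<and> a2 \<in> A p \<and> a \<in> joint N A \<and> a p = a2
     then G (a(p := a1)) - G (a(p := a2)) else 0)"

definition T_CCE :: "nat \<Rightarrow> (nat \<Rightarrow> 'a set) \<Rightarrow> nat \<Rightarrow> ((nat \<Rightarrow> 'a) \<Rightarrow> real)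
    \<Rightarrow> ('a \<times> (nat \<Rightarrow> 'a)) \<Rightarrow> real" where
  "T_CCE N A p G = (\<lambda>(a1, a).
     if a1 \<in> A p \<and> a \<in> joint N A
     then G (a(p := a1)) - G a else 0)"

end

theory Submission
  imports Defs
begin

lemma fscale_vs: "vector_space (fscale :: real \<Rightarrow> ('b \<Rightarrow> real) \<Rightarrow> _)"
  by unfold_locales (auto simp: fscale_def fun_eq_iff algebra_simps)

lemma sum_fun_apply: "finite S \<Longrightarrow> (sum f S :: 'b \<Rightarrow> real) y = (\<Sum>a\<in>S. f a y)"
  by (induction S rule: finite_induct) auto

lemma rank_generic:
  fixes T :: "((nat \<Rightarrow> 'a) \<Rightarrow> real) \<Rightarrow> ('b \<Rightarrow> real)"
  assumes pN: "p < N" and fin: "\<And>q. q < N \<Longrightarrow> finite (A q) \<and> A q \<noteq> {}"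
  and add: "\<And>F G. T (F + G) = T F + T G"
  and sc: "\<And>c G. T (fscale c G) = fscale c (T G)"
  and ker: "\<And>G. G \<in> payoffs N A \<Longrightarrow> (T G = 0) = (\<forall>a\<in>joint N A. \<forall>x\<in>A p. G (a(p:=x)) = G a)"
  shows "rank_on (payoffs N A) T = card (joint N A) - card (opp N A p)"
proof -
  interpret v: vector_space "fscale :: real \<Rightarrow> ('b \<Rightarrow> real) \<Rightarrow> _" by (rule fscale_vs)
  obtain c where c: "c \<in> A p" using fin[OF pN] by auto
  define J where "J = joint N A"
  have finJ: "finite J" unfolding J_def joint_def using fin by (auto intro!: finite_PiE)
  define D where "D = {a\<in>J. a p \<noteq> c}"
  define \<delta> where "\<delta> a = (\<lambda>y. if y = a then 1 else 0 :: real)" for a :: "nat \<Rightarrow> 'a"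
  have finD: "finite D" using finJ D_def by auto
  have T0: "T 0 = 0" using sc[of 0 0] by (simp add: fscale_def zero_fun_def)
  have Tsum: "T (\<Sum>a\<in>S. fscale (u a) (\<delta> a)) = (\<Sum>a\<in>S. fscale (u a) (T (\<delta> a)))"
    if "finite S" for S u using that
  proof (induction S rule: finite_induct)
    case empty then show ?case by (simp only: sum.empty T0)
  next
    case (insert x F)
    show ?case by (simp only: sum.insert[OF insert.hyps] add sc insert.IH)
  qed
  have sumeval: "(\<Sum>a\<in>S. fscale (u a) (\<delta> a)) y = (if y \<in> S then u y else 0)"
    if "finite S" for S u y using that
    by (simp add: sum_fun_apply fscale_def \<delta>_def if_distrib cong: if_cong)
  have upd: "a(p:=x) \<in> J" if "a \<in> J" "x \<in> A p" for a x
    using that pN unfolding J_def joint_def by (auto simp: PiE_iff extensional_def)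
  have pay_sum: "(\<Sum>a\<in>S. fscale (u a) (\<delta> a)) \<in> payoffs N A" if "S \<subseteq> J" for S u
  proof -
    have "finite S" using that finJ finite_subset by blast
    then show ?thesis using that unfolding payoffs_def J_def by (auto simp: sumeval)
  qed
  have \<delta>pay: "\<delta> a \<in> payoffs N A" if "a \<in> J" for a
    using that unfolding payoffs_def \<delta>_def J_def by auto
  define B where "B = (\<lambda>a. T (\<delta> a)) ` D"
  have inj: "inj_on (\<lambda>a. T (\<delta> a)) D"
  proof (rule inj_onI, rule ccontr)
    fix a a' assume a: "a \<in> D" "a' \<in> D" and eq: "T (\<delta> a) = T (\<delta> a')" and ne: "a \<noteq> a'"
    let ?G = "(\<Sum>b\<in>{a,a'}. fscale ((\<lambda>b. if b = a then 1 else -1) b) (\<delta> b))"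
    have "T ?G = (\<Sum>b\<in>{a,a'}. fscale ((\<lambda>b. if b = a then 1 else -1) b) (T (\<delta> b)))"
      by (rule Tsum) simp
    also have "\<dots> = 0" using ne eq by (auto simp: fscale_def fun_eq_iff)
    finally have "T ?G = 0" .
    moreover have "?G \<in> payoffs N A" by (rule pay_sum) (use a D_def in auto)
    ultimately have "\<forall>b\<in>J. \<forall>x\<in>A p. ?G (b(p:=x)) = ?G b" using ker J_def by blast
    then have "?G (a(p:=c)) = ?G a" using a c D_def by auto
    moreover have "a(p:=c) \<noteq> a" "a(p:=c) \<noteq> a'" using a D_def by (auto dest: fun_cong[where x=p])
    ultimately show False using ne by (simp add: sumeval fscale_def \<delta>_def)
  qed
  have span: "T ` payoffs N A \<subseteq> v.span B"
  proof
    fix z assume "z \<in> T ` payoffs N A"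
    then obtain G where G: "G \<in> payoffs N A" and z: "z = T G" by auto
    define K where "K y = (if y \<in> J then G (y(p:=c)) else 0)" for y
    define H where "H = (\<Sum>a\<in>D. fscale (G a - K a) (\<delta> a))"
    have Kp: "K \<in> payoffs N A" unfolding payoffs_def K_def J_def by auto
    have "T K = 0" using ker[OF Kp] upd unfolding K_def J_def by auto
    have GKH: "G = H + K"
    proof
      fix y
      show "G y = (H + K) y"
      proof (cases "y \<in> D")
        case True then show ?thesis by (simp add: H_def sumeval finD)
      next
        case False
        then have "y \<notin> J \<or> y p = c" using D_def by auto
        then show ?thesis
        proof
          assume "y \<notin> J" then show ?thesis using G False
            by (simp add: H_def sumeval finD K_def payoffs_def J_def)
        next
          assume "y p = c" then show ?thesis using False G
            by (simp add: H_def sumeval finD K_def fun_upd_idem payoffs_def J_def)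
        qed
      qed
    qed
    have "z = T H" using z GKH add \<open>T K = 0\<close> by simp
    also have "\<dots> = (\<Sum>a\<in>D. fscale (G a - K a) (T (\<delta> a)))" unfolding H_def by (rule Tsum[OF finD])
    also have "\<dots> \<in> v.span B"
      by (rule v.span_sum, rule v.span_scale, rule v.span_base) (auto simp: B_def)
    finally show "z \<in> v.span B" .
  qed
  have finB: "finite B" using finD B_def by auto
  have indep: "v.independent B"
    unfolding v.dependent_finite[OF finB]
  proof (rule notI, elim exE conjE bexE)
    fix u and w assume sum0: "(\<Sum>v\<in>B. fscale (u v) v) = 0" and w: "w \<in> B" and uw: "u w \<noteq> 0"
    then obtain a where a: "a \<in> D" and wa: "w = T (\<delta> a)" using B_def by auto
    define u' where "u' b = u (T (\<delta> b))" for b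
    have "(\<Sum>v\<in>B. fscale (u v) v) = (\<Sum>b\<in>D. fscale (u' b) (T (\<delta> b)))"
      unfolding B_def u'_def by (simp add: sum.reindex[OF inj])
    then have "T (\<Sum>b\<in>D. fscale (u' b) (\<delta> b)) = 0" using sum0 Tsum[OF finD] by simp
    moreover have "(\<Sum>b\<in>D. fscale (u' b) (\<delta> b)) \<in> payoffs N A" by (rule pay_sum) (auto simp: D_def)
    ultimately have "\<forall>b\<in>J. \<forall>x\<in>A p. (\<Sum>b\<in>D. fscale (u' b) (\<delta> b)) (b(p:=x)) = (\<Sum>b\<in>D. fscale (u' b) (\<delta> b)) b"
      using ker J_def by blast
    then have "(\<Sum>b\<in>D. fscale (u' b) (\<delta> b)) (a(p:=c)) = (\<Sum>b\<in>D. fscale (u' b) (\<delta> b)) a"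
      using a c D_def by auto
    moreover have "a(p:=c) \<notin> D" using D_def by auto
    ultimately have "u' a = 0" using a by (simp add: sumeval finD)
    then show False using wa u'_def uw by simp
  qed
  have BV: "B \<subseteq> T ` payoffs N A" using \<delta>pay D_def B_def by auto
  have cardB: "card B = card D" using inj B_def card_image by blast
  have bij: "bij_betw (\<lambda>a. a(p:=undefined)) {a\<in>J. a p = c} (opp N A p)"
  proof (rule bij_betwI[where g = "\<lambda>b. b(p:=c)"])
    show "(\<lambda>a. a(p:=undefined)) \<in> {a\<in>J. a p = c} \<rightarrow> opp N A p"
      unfolding J_def joint_def opp_def by (auto simp: PiE_iff extensional_def)
    show "(\<lambda>b. b(p:=c)) \<in> opp N A p \<rightarrow> {a\<in>J. a p = c}"
      using c pN unfolding J_def joint_def opp_def by (auto simp: PiE_iff extensional_def)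
    show "x(p:=undefined, p:=c) = x" if "x \<in> {a\<in>J. a p = c}" for x using that by auto
    show "y(p:=c, p:=undefined) = y" if "y \<in> opp N A p" for y
      using that unfolding opp_def by (auto simp: PiE_iff extensional_def fun_eq_iff)
  qed
  have cardD: "card D = card J - card (opp N A p)"
  proof -
    have "D = J - {a\<in>J. a p = c}" using D_def by auto
    then have "card D = card J - card {a\<in>J. a p = c}" using finJ by (simp add: card_Diff_subset)
    then show ?thesis using bij_betw_same_card[OF bij] by simp
  qed
  have "v.dim (T ` payoffs N A) = card J - card (opp N A p)"
    by (rule v.dim_unique[OF BV span indep]) (simp add: cardB cardD)
  then show ?thesis unfolding rank_on_def fdim_def J_def .
qed

theorem mainTheorem7:
  fixes N :: nat and A :: "nat \<Rightarrow> 'a set" and p :: nat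
  assumes "p < N"
    and "\<And>q. q < N \<Longrightarrow> finite (A q) \<and> A q \<noteq> {}"
  shows "rank_on (payoffs N A) (T_WSCE N A p) = card (joint N A) - card (opp N A p)
       \<and> rank_on (payoffs N A) (T_CE N A p) = card (joint N A) - card (opp N A p)
       \<and> rank_on (payoffs N A) (T_CCE N A p) = card (joint N A) - card (opp N A p)"
proof (intro conjI)
  show "rank_on (payoffs N A) (T_WSCE N A p) = card (joint N A) - card (opp N A p)"
  proof (rule rank_generic[OF assms])
    show "T_WSCE N A p (F + G) = T_WSCE N A p F + T_WSCE N A p G" for F G
      by (auto simp: T_WSCE_def fun_eq_iff)
    show "T_WSCE N A p (fscale c G) = fscale c (T_WSCE N A p G)" for c G
      by (auto simp: T_WSCE_def fscale_def fun_eq_iff algebra_simps)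
    show "(T_WSCE N A p G = 0) = (\<forall>a\<in>joint N A. \<forall>x\<in>A p. G (a(p:=x)) = G a)" for G
    proof
      assume h: "T_WSCE N A p G = 0"
      show "\<forall>a\<in>joint N A. \<forall>x\<in>A p. G (a(p:=x)) = G a"
      proof (intro ballI)
        fix a x assume a: "a \<in> joint N A" and x: "x \<in> A p"
        have b: "a(p:=undefined) \<in> opp N A p" using a unfolding joint_def opp_def
          by (auto simp: PiE_iff extensional_def)
        have ap: "a p \<in> A p" using a assms(1) unfolding joint_def by auto
        have "T_WSCE N A p G (x, a p, a(p:=undefined)) = 0" using h by simp
        then show "G (a(p:=x)) = G a" using b ap x by (simp add: T_WSCE_def)
      qed
    next
      assume h: "\<forall>a\<in>joint N A. \<forall>x\<in>A p. G (a(p:=x)) = G a"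
      show "T_WSCE N A p G = 0"
      proof
        fix t :: "'a \<times> 'a \<times> (nat \<Rightarrow> 'a)"
        obtain a1 a2 b where t: "t = (a1, a2, b)" by (cases t) auto
        show "T_WSCE N A p G t = 0 t"
        proof (cases "a1 \<in> A p \<and> a2 \<in> A p \<and> b \<in> opp N A p")
          case True
          then have "b(p:=a2) \<in> joint N A" using assms(1) unfolding joint_def opp_def
            by (auto simp: PiE_iff extensional_def)
          then have "G ((b(p:=a2))(p:=a1)) = G (b(p:=a2))" using h True by blast
          then show ?thesis using True t by (simp add: T_WSCE_def)
        qed (auto simp: t T_WSCE_def)
      qed
    qed
  qed
  show "rank_on (payoffs N A) (T_CE N A p) = card (joint N A) - card (opp N A p)"
  proof (rule rank_generic[OF assms])
    show "T_CE N A p (F + G) = T_CE N A p F + T_CE N A p G" for F G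
      by (auto simp: T_CE_def fun_eq_iff)
    show "T_CE N A p (fscale c G) = fscale c (T_CE N A p G)" for c G
      by (auto simp: T_CE_def fscale_def fun_eq_iff algebra_simps)
    show "(T_CE N A p G = 0) = (\<forall>a\<in>joint N A. \<forall>x\<in>A p. G (a(p:=x)) = G a)" for G
    proof
      assume h: "T_CE N A p G = 0"
      show "\<forall>a\<in>joint N A. \<forall>x\<in>A p. G (a(p:=x)) = G a"
      proof (intro ballI)
        fix a x assume a: "a \<in> joint N A" and x: "x \<in> A p"
        have ap: "a p \<in> A p" using a assms(1) unfolding joint_def by auto
        have "T_CE N A p G (x, a p, a) = 0" using h by simp
        then show "G (a(p:=x)) = G a" using a ap x by (simp add: T_CE_def)
      qed
    next
      assume h: "\<forall>a\<in>joint N A. \<forall>x\<in>A p. G (a(p:=x)) = G a"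
      show "T_CE N A p G = 0"
        using h by (auto simp: T_CE_def fun_eq_iff)
    qed
  qed
  show "rank_on (payoffs N A) (T_CCE N A p) = card (joint N A) - card (opp N A p)"
  proof (rule rank_generic[OF assms])
    show "T_CCE N A p (F + G) = T_CCE N A p F + T_CCE N A p G" for F G
      by (auto simp: T_CCE_def fun_eq_iff)
    show "T_CCE N A p (fscale c G) = fscale c (T_CCE N A p G)" for c G
      by (auto simp: T_CCE_def fscale_def fun_eq_iff algebra_simps)
    show "(T_CCE N A p G = 0) = (\<forall>a\<in>joint N A. \<forall>x\<in>A p. G (a(p:=x)) = G a)" for G
    proof
      assume h: "T_CCE N A p G = 0"
      show "\<forall>a\<in>joint N A. \<forall>x\<in>A p. G (a(p:=x)) = G a"
      proof (intro ballI)
        fix a x assume a: "a \<in> joint N A" and x: "x \<in> A p"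
        have "T_CCE N A p G (x, a) = 0" using h by simp
        then show "G (a(p:=x)) = G a" using a x by (simp add: T_CCE_def)
      qed
    next
      assume h: "\<forall>a\<in>joint N A. \<forall>x\<in>A p. G (a(p:=x)) = G a"
      show "T_CCE N A p G = 0"
        using h by (auto simp: T_CCE_def fun_eq_iff)
    qed
  qed
qed

end
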